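(* Let $k \ge 1$ and $m \in \{4k+3, 4k+5\}$, $\theta = 2\pi/m$. For every finite point set $P$ in general position and every $u, w \in P$, the path produced by $\theta$-routing from $u$ to $w$ in the $\theta_m$-graph on $P$ has length at most $$\left(1 + \frac{2\sin(\theta/2)\cos(\theta/4)}{\cos(\theta/2) - \sin(3\theta/4)}\right)|uw|.$$
   Context: Cones: for $m \ge 2$, $\theta = 2\pi/m$; around each point $u$ draw $m$ rays with consecutive angular separation $\theta$, oriented so the vertical upward ray from $u$ bisects a cone $C_0^u$; cones numbered clockwise, same orientation at every point. General position: no two points on a line parallel to a cone boundary ray, no two on a line perpendicular to a cone bisector, no three collinear. The $\theta_m$-graph on $P$: for each $u\in P$ and each cone $C_i^u$ containing another point of $P$, add an edge from $u$ to the point of $C_i^u$ whose orthogonal projection onto the bisector of $C_i^u$ is closest to $u$; edges weighted by Euclidean length. $\theta$-routing with destination $t$: at the current vertex $x$, if $xt$ is an edge, follow it; otherwise follow the edge from $x$ in the cone of $x$ containing $t$. *)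

theory Defs
  imports "HOL-Analysis.Analysis"
begin

type_synonym point = "real \<times> real"

definition cone_angle :: "nat \<Rightarrow> real" where
  "cone_angle m = 2 * pi / real m"

text \<open>Unit vector at clockwise angle phi measured from the upward vertical.\<close>
definition dir :: "real \<Rightarrow> point" where
  "dir phi = (sin phi, cos phi)"

text \<open>Cone C_i^u (i < m): the half-open cone with apex u bisected by the ray at clockwise
  angle i*theta from the upward vertical (so C_0^u is bisected by the upward ray and cones
  are numbered clockwise).\<close>
definition in_cone :: "nat \<Rightarrow> point \<Rightarrow> nat \<Rightarrow> point \<Rightarrow> bool" where
  "in_cone m u i v \<longleftrightarrow> (\<exists>r phi. r > 0 \<and>
      real i * cone_angle m - cone_angle m / 2 \<le> phi \<and>
      phi < real i * cone_angle m + cone_angle m / 2 \<and>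
      v = u + r *\<^sub>R dir phi)"

definition proj_len :: "nat \<Rightarrow> point \<Rightarrow> nat \<Rightarrow> point \<Rightarrow> real" where
  "proj_len m u i v = (v - u) \<bullet> dir (real i * cone_angle m)"

definition cross :: "point \<Rightarrow> point \<Rightarrow> real" where
  "cross a b = fst a * snd b - snd a * fst b"

definition general_position :: "nat \<Rightarrow> point set \<Rightarrow> bool" where
  "general_position m P \<longleftrightarrow>
     (\<forall>p\<in>P. \<forall>q\<in>P. p \<noteq> q \<longrightarrow>
        (\<forall>i<m. cross (p - q) (dir (real i * cone_angle m - cone_angle m / 2)) \<noteq> 0) \<and>
        (\<forall>i<m. (p - q) \<bullet> dir (real i * cone_angle m) \<noteq> 0)) \<and>
     (\<forall>p\<in>P. \<forall>q\<in>P. \<forall>r\<in>P. p \<noteq> q \<and> q \<noteq> r \<and> p \<noteq> r \<longrightarrow> cross (q - p) (r - p) \<noteq> 0)"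

definition nbr :: "point set \<Rightarrow> nat \<Rightarrow> point \<Rightarrow> nat \<Rightarrow> point" where
  "nbr P m u i = (THE v. v \<in> P \<and> in_cone m u i v \<and>
       (\<forall>w\<in>P. in_cone m u i w \<longrightarrow> proj_len m u i v \<le> proj_len m u i w))"

definition theta_edge :: "point set \<Rightarrow> nat \<Rightarrow> point \<Rightarrow> point \<Rightarrow> bool" where
  "theta_edge P m x y \<longleftrightarrow> x \<in> P \<and> y \<in> P \<and>
     ((\<exists>i<m. in_cone m x i y \<and> y = nbr P m x i) \<or>
      (\<exists>i<m. in_cone m y i x \<and> x = nbr P m y i))"

definition cone_idx :: "nat \<Rightarrow> point \<Rightarrow> point \<Rightarrow> nat" where
  "cone_idx m x t = (THE i. i < m \<and> in_cone m x i t)"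

definition route_step :: "point set \<Rightarrow> nat \<Rightarrow> point \<Rightarrow> point \<Rightarrow> point" where
  "route_step P m t x =
     (if x = t then t
      else if theta_edge P m x t then t
      else nbr P m x (cone_idx m x t))"

definition route_seq :: "point set \<Rightarrow> nat \<Rightarrow> point \<Rightarrow> point \<Rightarrow> nat \<Rightarrow> point" where
  "route_seq P m u t n = (route_step P m t ^^ n) u"

definition route_len :: "point set \<Rightarrow> nat \<Rightarrow> point \<Rightarrow> point \<Rightarrow> nat \<Rightarrow> real" where
  "route_len P m u t n = (\<Sum>j<n. dist (route_seq P m u t j) (route_seq P m u t (Suc j)))"

end

theory Submission
  imports Defs "HOL-Analysis.Analysis"
begin


definition gg :: "real \<Rightarrow> real \<Rightarrow> real" where
  "gg x b = (1 - sin x) * cos b + cos x * \<bar>sin b\<bar>"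

lemma gg_even: "gg x (-b) = gg x b" by (simp add: gg_def)

lemma gg_pos: "0 \<le> b \<Longrightarrow> b \<le> pi \<Longrightarrow> gg x b = cos b + sin (b - x)"
  using sin_ge_zero[of b] by (simp add: gg_def sin_diff algebra_simps)

lemma g_mono:
  assumes x: "0 < x" "x \<le> pi/14" and b: "0 \<le> b" "b \<le> 2*x"
  shows "cos b + sin (b - x) \<le> cos (2*x) + sin x"
proof -
  have e1: "cos b - cos (2*x) = 2 * sin ((b + 2*x)/2) * sin ((2*x - b)/2)" by (rule cos_diff_cos)
  have e2: "sin x - sin (b - x) = 2 * sin ((2*x - b)/2) * cos (b/2)"
    using sin_diff_sin[of x "b - x"] by (simp add: algebra_simps)
  have s0: "0 \<le> sin ((2*x - b)/2)" by (rule sin_ge_zero) (use x b in auto)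
  have "sin ((b + 2*x)/2) \<le> sin (pi/2 - b/2)"
    by (subst sin_mono_le_eq) (use x b in auto)
  also have "\<dots> = cos (b/2)" by (simp add: sin_cos_eq)
  finally have "sin ((b + 2*x)/2) \<le> cos (b/2)" .
  hence "sin ((2*x - b)/2) * sin ((b + 2*x)/2) \<le> sin ((2*x - b)/2) * cos (b/2)"
    using s0 by (rule mult_left_mono)
  thus ?thesis using e1 e2 by (simp add: algebra_simps)
qed

lemma g_mid:
  assumes x: "0 < x" "x \<le> pi/14" and p: "2*x \<le> p" "p \<le> pi/2 - x"
  shows "cos (2*x) + sin x \<le> cos p + sin (p - x)"
proof -
  have e1: "cos p - cos (2*x) = 2 * sin ((p + 2*x)/2) * sin ((2*x - p)/2)" by (rule cos_diff_cos)
  have e2: "sin (p - x) - sin x = 2 * sin ((p - 2*x)/2) * cos (p/2)"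
    using sin_diff_sin[of "p - x" x] by (simp add: algebra_simps)
  have e3: "sin ((2*x - p)/2) = - sin ((p - 2*x)/2)"
    by (metis minus_diff_eq minus_divide_left sin_minus)
  have s0: "0 \<le> sin ((p - 2*x)/2)" by (rule sin_ge_zero) (use x p in auto)
  have "sin ((p + 2*x)/2) \<le> sin (pi/2 - p/2)"
    by (subst sin_mono_le_eq) (use x p in auto)
  also have "\<dots> = cos (p/2)" by (simp add: sin_cos_eq)
  finally have "sin ((p + 2*x)/2) \<le> cos (p/2)" .
  hence "sin ((p - 2*x)/2) * sin ((p + 2*x)/2) \<le> sin ((p - 2*x)/2) * cos (p/2)"
    using s0 by (simp add: mult_left_mono)
  thus ?thesis using e1 e2 e3 by (simp add: algebra_simps)
qed

lemma int_lt_from_real: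
  fixes L N :: int and x :: real
  assumes "x > 0" "of_int L * x < of_int N * x" shows "L < N"
  using assms by (simp add: mult_less_cancel_right_pos)

lemma gg_core_pos:
  fixes L :: int and k m :: nat
  assumes k: "k \<ge> 1" and mk: "m = 4*k+3 \<or> m = 4*k+5" and xm: "real m * x = pi/2" and x: "x > 0"
    and p: "0 \<le> p" "p \<le> pi/2" and b: "b = p - 4 * of_int L * x" "-2*x \<le> b" "b \<le> 2*x"
  shows "gg x b \<le> gg x p"
proof -
  have m7: "real m \<ge> 7" using mk k by auto
  have "7 * x \<le> real m * x" using m7 x by (simp add: mult_right_mono)
  hence x14: "x \<le> pi/14" using xm by simp
  have gp: "gg x p = cos p + sin (p - x)" using p by (intro gg_pos) auto
  have gb: "gg x b \<le> cos (2*x) + sin x"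
  proof (cases "b \<ge> 0")
    case True thus ?thesis using gg_pos[of b x] g_mono[OF x x14, of b] b x14 by auto
  next
    case False
    have "gg x b = gg x (-b)" by (simp add: gg_even)
    also have "\<dots> = cos (-b) + sin (-b - x)" using False b x14 by (intro gg_pos) auto
    also have "\<dots> \<le> cos (2*x) + sin x" using g_mono[OF x x14, of "-b"] False b by auto
    finally show ?thesis .
  qed
  have Lx: "of_int L * x = (p - b)/4" using b by simp
  have Lx2: "of_int (-1) * x = - x" "of_int 2 * x = 2*x" "\<And>n::nat. of_int (int n) * x = real n * x"
     "\<And>n::nat. of_int (int n + 2) * x = real n * x + 2 * x" by (auto simp: algebra_simps)
  consider "p \<le> 2*x" | "2*x \<le> p" "p \<le> pi/2 - x" | "pi/2 - x < p" by linarith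
  thus ?thesis
  proof cases
    case 1
    have "of_int (-1) * x < of_int L * x" using b 1 p x Lx Lx2 by linarith
    hence L0: "-1 < L" using x int_lt_from_real by blast
    have "of_int L * x < of_int 2 * x" using b 1 p x Lx Lx2 by linarith
    hence L1: "L < 2" using x int_lt_from_real by blast
    show ?thesis
    proof (cases "L = 0")
      case True thus ?thesis using b by simp
    next
      case False
      hence "L = 1" using L0 L1 by linarith
      hence "b = - p" using b 1 by simp
      thus ?thesis by (simp add: gg_even)
    qed
  next
    case 2
    thus ?thesis using gb g_mid[OF x x14 2] gp by linarith
  next
    case 3
    from mk show ?thesis
    proof
      assume m3: "m = 4*k+3"
      have pi2: "pi/2 = 4 * (real k * x) + 3 * x" using xm m3 by (simp add: algebra_simps)
      have "of_int (int k) * x < of_int L * x"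
      proof - have "real k * x < (p-b)/4" using b(3) 3 pi2 x by (simp add: field_simps) thus ?thesis using Lx by simp qed
      hence "int k < L" using x int_lt_from_real by blast
      moreover have "of_int L * x < of_int (int k + 2) * x"
      proof - have "(p-b)/4 < real k * x + 2 * x" using b(2) p pi2 x by (simp add: field_simps) thus ?thesis using Lx by (simp add: algebra_simps) qed
      hence "L < int k + 2" using x int_lt_from_real by blast
      ultimately have "L = int k + 1" by linarith
      hence bb: "b = p - pi/2 - x" using b pi2 by (simp add: algebra_simps)
      have "gg x b = gg x (-b)" by (simp add: gg_even)
      also have "\<dots> = cos (-b) + sin (-b - x)" using b bb x14 p 3 x by (intro gg_pos) auto
      also have "\<dots> = cos p + sin (p - x)"
        unfolding bb by (simp add: cos_diff sin_diff sin_add cos_add algebra_simps)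
      finally show ?thesis using gp by simp
    next
      assume m5: "m = 4*k+5"
      have pi2: "pi/2 = 4 * (real k * x) + 5 * x" using xm m5 by (simp add: algebra_simps)
      have "of_int (int k) * x < of_int L * x"
      proof - have "real k * x < (p-b)/4" using b(3) 3 pi2 x by (simp add: field_simps) thus ?thesis using Lx by simp qed
      hence "int k < L" using x int_lt_from_real by blast
      moreover have "of_int L * x < of_int (int k + 2) * x"
      proof - have "(p-b)/4 < real k * x + 2 * x" using b(2) p pi2 x by (simp add: field_simps) thus ?thesis using Lx by (simp add: algebra_simps) qed
      hence "L < int k + 2" using x int_lt_from_real by blast
      ultimately have "L = int k + 1" by linarith
      hence bb: "b = p - pi/2 + x" using b pi2 by (simp add: algebra_simps)
      have "gg x b = cos b + sin (b - x)" using b bb x14 p 3 x by (intro gg_pos) auto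
      also have "\<dots> = sin p * cos x + cos p * sin x - cos p"
        unfolding bb by (simp add: cos_diff sin_diff sin_add cos_add algebra_simps)
      also have "\<dots> \<le> cos p + sin (p - x)"
      proof -
        have "0 \<le> cos p" using p by (intro cos_ge_zero) auto
        moreover have "sin x \<le> 1" by simp
        ultimately have "cos p * sin x \<le> cos p" by (simp add: mult_left_le)
        thus ?thesis by (simp add: sin_diff algebra_simps)
      qed
      finally show ?thesis using gp by simp
    qed
  qed
qed

lemma gg_core:
  fixes L :: int and k m :: nat
  assumes k: "k \<ge> 1" and mk: "m = 4*k+3 \<or> m = 4*k+5" and xm: "real m * x = pi/2" and x: "x > 0"
    and p: "-(pi/2) \<le> p" "p \<le> pi/2" and b: "b = p - 4 * of_int L * x" "-2*x \<le> b" "b \<le> 2*x"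
  shows "gg x b \<le> gg x p"
proof (cases "p \<ge> 0")
  case True thus ?thesis using gg_core_pos[OF k mk xm x] p b by auto
next
  case False
  have "gg x (-b) \<le> gg x (-p)"
    by (rule gg_core_pos[OF k mk xm x, where L="-L" and b="-b" and p="-p"]) (use False p b in auto)
  thus ?thesis by (simp add: gg_even)
qed



lemma dir_inner: "dir a \<bullet> dir b = cos (a - b)"
  by (simp add: dir_def inner_prod_def cos_diff algebra_simps)

lemma norm_dir[simp]: "norm (dir a) = 1"
  by (simp add: dir_def norm_prod_def)

lemma polar:
  fixes v :: point assumes "v \<noteq> 0"
  obtains phi where "0 \<le> phi" "phi < 2*pi" "v = norm v *\<^sub>R dir phi"
proof -
  have n: "norm v > 0" using assms by simp
  have nn: "(norm v)\<^sup>2 = (fst v)\<^sup>2 + (snd v)\<^sup>2" by (simp add: norm_prod_def)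
  have "(snd v / norm v)\<^sup>2 + (fst v / norm v)\<^sup>2 = ((fst v)\<^sup>2 + (snd v)\<^sup>2) / (norm v)\<^sup>2"
    by (simp add: power_divide add_divide_distrib)
  moreover have "(fst v)\<^sup>2 + (snd v)\<^sup>2 \<noteq> 0" using n nn by (metis less_irrefl zero_less_power2 norm_zero)
  ultimately have "(snd v / norm v)\<^sup>2 + (fst v / norm v)\<^sup>2 = 1" using nn by simp
  then obtain t where t: "0 \<le> t" "t < 2*pi" "snd v / norm v = cos t" "fst v / norm v = sin t"
    by (rule sincos_total_2pi)
  have "v = norm v *\<^sub>R dir t"
    using t n by (cases v) (simp add: dir_def field_simps)
  thus ?thesis using t that by blast
qed

lemma dir_eq_int:
  assumes "dir a = dir b" shows "\<exists>n::int. a = b + of_int n * (2*pi)"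
proof -
  have "cos (a - b) = 1" using assms dir_inner[of a b] dir_inner[of a a] by simp
  then obtain n :: int where "a - b = of_int n * 2 * pi" using cos_one_2pi_int by blast
  thus ?thesis by (intro exI[of _ n]) (simp add: algebra_simps)
qed

lemma cone_angle_pos: "m > 0 \<Longrightarrow> cone_angle m > 0"
  by (simp add: cone_angle_def)

lemma cone_angle_m: "m > 0 \<Longrightarrow> real m * cone_angle m = 2 * pi"
  by (simp add: cone_angle_def)

lemma in_cone_polar:
  assumes "in_cone m u i v"
  obtains phi where "real i * cone_angle m - cone_angle m / 2 \<le> phi"
    "phi < real i * cone_angle m + cone_angle m / 2" "v - u = norm (v - u) *\<^sub>R dir phi" "v \<noteq> u"
proof -
  from assms obtain r phi where r: "r > 0" "real i * cone_angle m - cone_angle m / 2 \<le> phi"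
      "phi < real i * cone_angle m + cone_angle m / 2" "v = u + r *\<^sub>R dir phi"
    unfolding in_cone_def by blast
  have e: "v - u = r *\<^sub>R dir phi" using r by simp
  have "norm (v - u) = r" using r by simp
  hence "v - u = norm (v - u) *\<^sub>R dir phi" using e by simp
  moreover have "v \<noteq> u" using e r by (metis norm_dir norm_zero right_minus_eq scaleR_eq_0_iff zero_neq_one less_irrefl)
  ultimately show ?thesis using r that[of phi] by blast
qed

lemma in_cone_I:
  assumes "real i * cone_angle m - cone_angle m / 2 \<le> phi"
    "phi < real i * cone_angle m + cone_angle m / 2" "v - u = r *\<^sub>R dir phi" "r > 0"
  shows "in_cone m u i v"
  unfolding in_cone_def using assms by (intro exI[of _ r] exI[of _ phi]) (auto simp: algebra_simps)

lemma cone_exists: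
  assumes m: "m > 0" and v: "v \<noteq> u"
  shows "\<exists>i<m. in_cone m u i v"
proof -
  let ?th = "cone_angle m"
  have th: "?th > 0" "real m * ?th = 2*pi" using m cone_angle_pos cone_angle_m by auto
  obtain phi where phi: "0 \<le> phi" "phi < 2*pi" "v - u = norm (v - u) *\<^sub>R dir phi"
    using polar[of "v - u"] v by auto
  define psi where "psi = (if phi < 2*pi - ?th/2 then phi else phi - 2*pi)"
  have dpsi: "dir psi = dir phi"
    by (simp add: psi_def dir_def sin_diff cos_diff)
  have "real m * ?th \<ge> 1 * ?th" using m th by (intro mult_right_mono) auto
  hence "?th \<le> 2*pi" using th by simp
  hence ps: "- (?th/2) \<le> psi" "psi < 2*pi - ?th/2" using phi th by (auto simp: psi_def)
  define i where "i = nat \<lfloor>(psi + ?th/2) / ?th\<rfloor>"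
  have fl0: "0 \<le> \<lfloor>(psi + ?th/2) / ?th\<rfloor>" using ps th by simp
  have i1: "real i \<le> (psi + ?th/2) / ?th" using fl0 unfolding i_def by simp
  have i2: "(psi + ?th/2) / ?th < real i + 1" using fl0 unfolding i_def by linarith
  have a1: "real i * ?th \<le> psi + ?th/2" using i1 th by (simp add: field_simps)
  have a2: "psi + ?th/2 < (real i + 1) * ?th" using i2 th by (simp add: field_simps)
  have "(psi + ?th/2) / ?th < 2*pi / ?th" using ps th by (simp add: divide_strict_right_mono)
  also have "2*pi / ?th = real m" using th by (simp add: field_simps)
  finally have "real i < real m" using i1 by linarith
  hence "i < m" by simp
  moreover have "in_cone m u i v"
    by (rule in_cone_I[of i m psi v u "norm (v - u)"]) (use a1 a2 phi dpsi v in \<open>auto simp: algebra_simps\<close>)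
  ultimately show ?thesis by blast
qed

lemma cone_unique:
  assumes m: "m > 0" and c1: "in_cone m u i v" and c2: "in_cone m u j v" and ij: "i < m" "j < m"
  shows "i = j"
proof -
  let ?th = "cone_angle m"
  have th: "?th > 0" "real m * ?th = 2*pi" using m cone_angle_pos cone_angle_m by auto
  obtain a where a: "real i * ?th - ?th/2 \<le> a" "a < real i * ?th + ?th/2" "v - u = norm (v - u) *\<^sub>R dir a" "v \<noteq> u"
    using in_cone_polar[OF c1] by blast
  obtain b where b: "real j * ?th - ?th/2 \<le> b" "b < real j * ?th + ?th/2" "v - u = norm (v - u) *\<^sub>R dir b"
    using in_cone_polar[OF c2] by blast
  have "norm (v - u) > 0" using a by simp
  hence "dir a = dir b" using a(3) b(3) by (metis scaleR_left_imp_eq less_irrefl)  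
  then obtain n :: int where n: "a = b + of_int n * (2*pi)" using dir_eq_int by blast
  have iu: "real i * ?th \<le> (real m - 1) * ?th" "real j * ?th \<le> (real m - 1) * ?th"
    using ij th by (auto intro!: mult_right_mono)
  have i0: "0 \<le> real i * ?th" "0 \<le> real j * ?th" using th by auto
  have "(real m - 1) * ?th = 2*pi - ?th" using th by (simp add: algebra_simps)
  hence "a - b < 2*pi" "b - a < 2*pi" using a(1,2) b(1,2) iu i0 by linarith+
  hence "\<bar>a - b\<bar> < 2*pi" by linarith
  hence "\<bar>of_int n\<bar> * (2*pi) < 1 * (2*pi)" using n by (simp add: abs_mult)
  hence "\<bar>of_int n\<bar> < (1::real)" by (simp add: mult_less_cancel_right_pos pi_gt_zero)
  hence "n = 0" by linarith
  hence "a = b" using n by simp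
  hence "real i * ?th < real j * ?th + ?th" "real j * ?th < real i * ?th + ?th" using a b by auto
  hence "real i * ?th < (real j + 1) * ?th" "real j * ?th < (real i + 1) * ?th"
    by (simp_all add: algebra_simps)
  hence "real i < real j + 1" "real j < real i + 1" using th
    by (simp_all add: mult_less_cancel_right_pos)
  thus ?thesis by linarith
qed

lemma cone_idx:
  assumes m: "m > 0" and v: "v \<noteq> u"
  shows "cone_idx m u v < m" "in_cone m u (cone_idx m u v) v"
proof -
  have "\<exists>!i. i < m \<and> in_cone m u i v" using cone_exists[OF m v] cone_unique[OF m] by blast
  hence "cone_idx m u v < m \<and> in_cone m u (cone_idx m u v) v"
    unfolding cone_idx_def by (rule theI')
  thus "cone_idx m u v < m" "in_cone m u (cone_idx m u v) v" by auto
qed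

lemma cone_idx_eq:
  assumes m: "m > 0" and "in_cone m u i v" "i < m" shows "cone_idx m u v = i"
  using assms cone_idx cone_unique in_cone_polar by metis



definition xq :: "nat \<Rightarrow> real" where "xq m = cone_angle m / 4"
definition DD :: "nat \<Rightarrow> real" where "DD m = cos (2 * xq m) - sin (3 * xq m)"
definition AA :: "nat \<Rightarrow> real" where "AA m = (1 - sin (xq m)) / DD m"
definition BB :: "nat \<Rightarrow> real" where "BB m = cos (xq m) / DD m"
definition Phi :: "nat \<Rightarrow> point \<Rightarrow> point \<Rightarrow> real" where
  "Phi m x t = AA m * ((t - x) \<bullet> dir (real (cone_idx m x t) * cone_angle m))
     + BB m * \<bar>(t - x) \<bullet> dir (real (cone_idx m x t) * cone_angle m + pi/2)\<bar>"

lemma Phi_self[simp]: "Phi m x x = 0" by (simp add: Phi_def)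

lemma dir_shift: "dir a = dir b \<Longrightarrow> dir (a + c) = dir (b + c)"
  by (simp add: dir_def sin_add cos_add)

lemma dir_inner_perp: "dir a \<bullet> dir (b + pi/2) = sin (a - b)"
  by (simp add: dir_inner cos_diff sin_diff sin_add cos_add algebra_simps)

lemma sin3: "sin (3 * x) = sin (2 * x) * cos x + cos (2 * x) * sin (x::real)"
  using sin_add[of "2*x" x] by (simp add: algebra_simps)

lemma sin1: "sin (x::real) = sin (2 * x) * cos x - cos (2 * x) * sin x"
  using sin_diff[of "2*x" x] by (simp add: algebra_simps)

locale rsetup =
  fixes k m :: nat
  assumes k: "k \<ge> 1" and mk: "m = 4*k+3 \<or> m = 4*k+5"
begin

abbreviation "th \<equiv> cone_angle m"
abbreviation "x0 \<equiv> xq m"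

lemma m_pos: "m > 0" using mk by auto
lemma m7: "real m \<ge> 7" using mk k by auto
lemma th_pos: "th > 0" using cone_angle_pos m_pos by simp
lemma x0_pos: "x0 > 0" using th_pos by (simp add: xq_def)
lemma x0m: "real m * x0 = pi/2" using cone_angle_m[OF m_pos] by (simp add: xq_def)
lemma x0_14: "x0 \<le> pi/14"
proof -
  have "7 * x0 \<le> real m * x0" using m7 x0_pos by (simp add: mult_right_mono)
  thus ?thesis using x0m by simp
qed
lemma th_x0: "th = 4 * x0" by (simp add: xq_def)

lemma D_pos: "DD m > 0"
proof -
  have "sin (3 * x0) < sin (pi/2 - 2 * x0)"
    by (subst sin_mono_less_eq) (use x0_pos x0_14 in auto)
  also have "\<dots> = cos (2 * x0)" by (simp add: sin_cos_eq)
  finally show ?thesis by (simp add: DD_def)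
qed

lemma C_pos: "cos (2 * x0) > 0" by (rule cos_gt_zero) (use x0_pos x0_14 in auto)
lemma S_pos: "sin (2 * x0) > 0" by (rule sin_gt_zero) (use x0_pos x0_14 in auto)
lemma sx_le1: "sin x0 < 1"
proof -
  have "sin x0 < sin (pi/2)" by (subst sin_mono_less_eq) (use x0_pos x0_14 in auto)
  thus ?thesis by simp
qed
lemma cx_pos: "cos x0 > 0" by (rule cos_gt_zero) (use x0_pos x0_14 in auto)
lemma B_nonneg: "BB m \<ge> 0" using cx_pos D_pos by (simp add: BB_def)
lemma A_pos: "AA m > 0" using sx_le1 D_pos by (simp add: AA_def)

lemma AC: "AA m * cos (2 * x0) = 1 + BB m * sin (2 * x0)"
proof -
  have "(1 - sin x0) * cos (2 * x0) = DD m + cos x0 * sin (2 * x0)"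
    unfolding DD_def sin3 by (simp add: algebra_simps)
  thus ?thesis using D_pos unfolding AA_def BB_def by (simp add: field_simps)
qed

lemma gg_Phi: "gg x0 b / DD m = AA m * cos b + BB m * \<bar>sin b\<bar>"
  unfolding gg_def AA_def BB_def using D_pos by (simp add: field_simps)

lemma cst_eq: "1 + 2 * sin (th / 2) * cos (th / 4) / (cos (th / 2) - sin (3 * th / 4))
    = (cos (2*x0) + sin x0) / DD m"
proof -
  have e: "th/2 = 2 * x0" "th/4 = x0" "3 * th / 4 = 3 * x0" by (simp_all add: xq_def)
  have "cos (2*x0) + sin x0 = DD m + 2 * sin (2*x0) * cos x0"
    unfolding DD_def using sin3[of x0] sin1[of x0] by (simp add: algebra_simps)
  thus ?thesis unfolding e using D_pos by (simp add: DD_def field_simps)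
qed

lemma gg_bound:
  assumes "-(2*x0) \<le> b" "b \<le> 2*x0"
  shows "gg x0 b \<le> cos (2*x0) + sin x0" "(1 - sin x0) * cos (2*x0) \<le> gg x0 b"
proof -
  have ab: "gg x0 b = gg x0 \<bar>b\<bar>" by (cases "b \<ge> 0") (simp_all add: gg_even)
  have "gg x0 \<bar>b\<bar> = cos \<bar>b\<bar> + sin (\<bar>b\<bar> - x0)" using assms x0_14 by (intro gg_pos) auto
  also have "\<dots> \<le> cos (2*x0) + sin x0" using g_mono[OF x0_pos x0_14, of "\<bar>b\<bar>"] assms by auto
  finally show "gg x0 b \<le> cos (2*x0) + sin x0" using ab by simp
  have "cos (2*x0) \<le> cos \<bar>b\<bar>" by (subst cos_mono_le_eq) (use assms x0_14 in auto)
  hence "cos (2*x0) \<le> cos b" by simp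
  hence "(1 - sin x0) * cos (2*x0) \<le> (1 - sin x0) * cos b" using sx_le1 by (simp add: mult_left_mono)
  thus "(1 - sin x0) * cos (2*x0) \<le> gg x0 b" unfolding gg_def using cx_pos
    by (smt (verit) mult_nonneg_nonneg abs_ge_zero)
qed

lemma Phi_cone:
  assumes c: "in_cone m x i t" "i < m"
  shows "Phi m x t = AA m * ((t - x) \<bullet> dir (real i * th)) + BB m * \<bar>(t - x) \<bullet> dir (real i * th + pi/2)\<bar>"
  using cone_idx_eq[OF m_pos c(1,2)] by (simp add: Phi_def)

lemma Phi_polar:
  assumes c: "in_cone m x i t" "i < m" and e: "t - x = r *\<^sub>R dir phi" and r: "r \<ge> 0"
  shows "Phi m x t = r * (gg x0 (phi - real i * th) / DD m)"
  unfolding Phi_cone[OF c] e gg_Phi using dir_inner[of phi] dir_inner_perp[of phi]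
  using r by (simp add: abs_mult algebra_simps)

lemma cos_nonneg_range:
  assumes "-pi < p" "p \<le> pi" "cos p \<ge> 0" shows "-(pi/2) \<le> p" "p \<le> pi/2"
proof -
  show "p \<le> pi/2"
  proof (rule ccontr)
    assume "\<not> p \<le> pi/2"
    hence "cos (p - pi) > 0" using assms by (intro cos_gt_zero_pi) auto
    thus False using assms by simp
  qed
  show "-(pi/2) \<le> p"
  proof (rule ccontr)
    assume "\<not> -(pi/2) \<le> p"
    hence "cos (p + pi) > 0" using assms by (intro cos_gt_zero_pi) auto
    moreover have "cos (p + pi) = - cos p" using cos_minus_pi[of "p + pi"] by simp
    ultimately show False using assms by simp
  qed
qed

lemma Phi_step_bound:
  assumes pr: "0 \<le> (t - y) \<bullet> dir (real i * th)" and ne: "y \<noteq> t"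
  shows "Phi m y t \<le> AA m * ((t - y) \<bullet> dir (real i * th)) + BB m * \<bar>(t - y) \<bullet> dir (real i * th + pi/2)\<bar>"
proof -
  define j where "j = cone_idx m y t"
  have j: "j < m" "in_cone m y j t" using cone_idx[OF m_pos, of t y] ne unfolding j_def by auto
  obtain pw where pw: "real j * th - th/2 \<le> pw" "pw < real j * th + th/2" "t - y = norm (t - y) *\<^sub>R dir pw"
    using in_cone_polar[OF j(2)] by blast
  define r where "r = norm (t - y)"
  have r: "r > 0" using ne by (simp add: r_def)
  have PY: "Phi m y t = r * (gg x0 (pw - real j * th) / DD m)"
    using Phi_polar[OF j(2,1) pw(3)] by (simp add: r_def)
  define p0 where "p0 = pw - real i * th"
  obtain t0 where t0: "0 \<le> t0" "t0 < 2*pi" "dir p0 = norm (dir p0) *\<^sub>R dir t0"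
    using polar[of "dir p0"] by (metis norm_dir norm_zero zero_neq_one)
  define p where "p = (if t0 \<le> pi then t0 else t0 - 2*pi)"
  have "dir p = dir t0" by (simp add: p_def dir_def sin_diff cos_diff)
  hence dp: "dir p = dir p0" using t0 by simp
  have prange: "-pi < p" "p \<le> pi" using t0 by (auto simp: p_def)
  have dpi: "dir (p + real i * th) = dir pw" using dir_shift[OF dp, of "real i * th"] by (simp add: p0_def)
  obtain n :: int where n: "pw = (p + real i * th) + of_int n * (2*pi)"
    using dir_eq_int[OF dpi[symmetric]] by blast
  define L where "L = int j - int i - int m * n"
  have "of_int n * (2*pi) = of_int n * (real m * th)" using cone_angle_m[OF m_pos] by simp
  hence beta: "pw - real j * th = p - 4 * of_int L * x0"
    using n unfolding L_def th_x0 by (simp add: algebra_simps)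
  have tw: "t - y = r *\<^sub>R dir (p + real i * th)" using pw(3) dpi by (simp add: r_def)
  have fy: "(t - y) \<bullet> dir (real i * th) = r * cos p" unfolding tw by (simp add: dir_inner)
  have fx: "(t - y) \<bullet> dir (real i * th + pi/2) = r * sin p" unfolding tw by (simp add: dir_inner_perp)
  have "cos p \<ge> 0" using pr fy r by (simp add: zero_le_mult_iff)
  note pr2 = cos_nonneg_range[OF prange this]
  have brange: "-2*x0 \<le> pw - real j * th" "pw - real j * th \<le> 2*x0" using pw th_x0 by auto
  have "gg x0 (pw - real j * th) \<le> gg x0 p"
    using gg_core[OF k mk x0m x0_pos pr2 beta brange] .
  hence "gg x0 (pw - real j * th) / DD m \<le> gg x0 p / DD m" using D_pos by (simp add: divide_right_mono)
  hence "Phi m y t \<le> r * (gg x0 p / DD m)" unfolding PY using r by (intro mult_left_mono) auto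
  also have "\<dots> = AA m * (r * cos p) + BB m * \<bar>r * sin p\<bar>" unfolding gg_Phi using r by (simp add: abs_mult algebra_simps)
  finally show ?thesis unfolding fy fx .
qed

lemma geo_step:
  assumes ct: "in_cone m x i t" "i < m" and cy: "in_cone m x i y"
    and pr: "proj_len m x i y \<le> proj_len m x i t"
  shows "dist x y + Phi m y t \<le> Phi m x t"
proof -
  define e1 where "e1 = dir (real i * th)"
  define e2 where "e2 = dir (real i * th + pi/2)"
  obtain py where py: "real i * th - th/2 \<le> py" "py < real i * th + th/2" "y - x = norm (y - x) *\<^sub>R dir py"
    using in_cone_polar[OF cy] by blast
  define s where "s = norm (y - x)"
  have s0: "s \<ge> 0" by (simp add: s_def)
  have ds: "dist x y = s" by (simp add: s_def dist_norm norm_minus_commute)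
  define g where "g = py - real i * th"
  have g: "\<bar>g\<bar> \<le> 2*x0" using py th_x0 by (auto simp: g_def)
  have yg: "y - x = s *\<^sub>R dir (g + real i * th)" using py(3) by (simp add: s_def g_def)
  have fyY: "(y - x) \<bullet> e1 = s * cos g" unfolding yg e1_def by (simp add: dir_inner)
  have fxY: "(y - x) \<bullet> e2 = s * sin g" unfolding yg e2_def by (simp add: dir_inner_perp)
  have cg: "cos (2*x0) \<le> cos g"
  proof -
    have "cos (2*x0) \<le> cos \<bar>g\<bar>" by (subst cos_mono_le_eq) (use g x0_14 in auto)
    thus ?thesis by simp
  qed
  have hY1: "cos (2*x0) * s \<le> (y - x) \<bullet> e1" unfolding fyY using mult_left_mono[OF cg s0] by (simp add: mult.commute)
  have sg: "cos (2*x0) * \<bar>sin g\<bar> \<le> sin (2*x0) * cos g"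
  proof -
    have "0 \<le> sin (2*x0 - \<bar>g\<bar>)" by (rule sin_ge_zero) (use g x0_14 in auto)
    also have "sin (2*x0 - \<bar>g\<bar>) = sin (2*x0) * cos g - cos (2*x0) * \<bar>sin g\<bar>"
    proof (cases "g \<ge> 0")
      case True
      have "sin g \<ge> 0" using True g x0_14 by (intro sin_ge_zero) auto
      thus ?thesis using True by (simp add: sin_diff)
    next
      case False
      have "sin (-g) \<ge> 0" using False g x0_14 by (intro sin_ge_zero) auto
      thus ?thesis using False by (simp add: sin_add)
    qed
    finally show ?thesis by simp
  qed
  have hY2: "cos (2*x0) * \<bar>(y - x) \<bullet> e2\<bar> \<le> sin (2*x0) * ((y - x) \<bullet> e1)"
    unfolding fxY fyY using sg s0 by (simp add: abs_mult mult_left_mono algebra_simps)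
  have PX: "Phi m x t = AA m * ((t - x) \<bullet> e1) + BB m * \<bar>(t - x) \<bullet> e2\<bar>"
    using Phi_cone[OF ct] by (simp add: e1_def e2_def)
  have PY: "Phi m y t \<le> AA m * ((t - y) \<bullet> e1) + BB m * \<bar>(t - y) \<bullet> e2\<bar>"
  proof (cases "y = t")
    case True thus ?thesis by simp
  next
    case False
    have "0 \<le> (t - y) \<bullet> e1" using pr unfolding proj_len_def e1_def
      by (simp add: inner_diff_left)
    thus ?thesis using Phi_step_bound[OF _ False] by (simp add: e1_def e2_def)
  qed
  define Y1 where "Y1 = (y - x) \<bullet> e1"
  define Y2 where "Y2 = (y - x) \<bullet> e2"
  define W1 where "W1 = (t - y) \<bullet> e1"
  define W2 where "W2 = (t - y) \<bullet> e2"
  have T1: "(t - x) \<bullet> e1 = Y1 + W1" unfolding Y1_def W1_def by (simp add: inner_diff_left)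
  have T2: "(t - x) \<bullet> e2 = Y2 + W2" unfolding Y2_def W2_def by (simp add: inner_diff_left)
  have h1: "cos (2*x0) * s \<le> Y1" using hY1 by (simp add: Y1_def)
  have h2: "cos (2*x0) * \<bar>Y2\<bar> \<le> sin (2*x0) * Y1" using hY2 by (simp add: Y1_def Y2_def)
  have "cos (2*x0) * (s + BB m * \<bar>Y2\<bar>) \<le> Y1 + BB m * (sin (2*x0) * Y1)"
  proof -
    have "BB m * (cos (2*x0) * \<bar>Y2\<bar>) \<le> BB m * (sin (2*x0) * Y1)" using h2 B_nonneg by (rule mult_left_mono)
    thus ?thesis using h1 by (simp add: algebra_simps)
  qed
  also have "\<dots> = cos (2*x0) * (AA m * Y1)" using AC by (simp add: algebra_simps)
  finally have h3: "s + BB m * \<bar>Y2\<bar> \<le> AA m * Y1" using C_pos by (simp add: mult_le_cancel_left_pos)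
  have "\<bar>W2\<bar> \<le> \<bar>Y2 + W2\<bar> + \<bar>Y2\<bar>" by linarith
  hence "BB m * \<bar>W2\<bar> \<le> BB m * \<bar>Y2 + W2\<bar> + BB m * \<bar>Y2\<bar>" using B_nonneg
    by (metis distrib_left mult_left_mono)
  thus ?thesis unfolding ds PX T1 T2 using PY h3 by (simp add: W1_def W2_def algebra_simps)
qed

lemma Phi_bounds:
  shows "dist x t \<le> Phi m x t" "Phi m x t \<le> (cos (2*x0) + sin x0) / DD m * dist x t"
proof -
  have "dist x t \<le> Phi m x t \<and> Phi m x t \<le> (cos (2*x0) + sin x0) / DD m * dist x t"
  proof (cases "x = t")
    case True thus ?thesis by simp
  next
    case False
    define i where "i = cone_idx m x t"
    have i: "i < m" "in_cone m x i t" using cone_idx[OF m_pos, of t x] False unfolding i_def by auto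
    obtain ph where ph: "real i * th - th/2 \<le> ph" "ph < real i * th + th/2" "t - x = norm (t - x) *\<^sub>R dir ph"
      using in_cone_polar[OF i(2)] by blast
    have d: "dist x t = norm (t - x)" by (simp add: dist_norm norm_minus_commute)
    have P: "Phi m x t = dist x t * (gg x0 (ph - real i * th) / DD m)"
      using Phi_polar[OF i(2,1) ph(3)] d by simp
    have br: "-(2*x0) \<le> ph - real i * th" "ph - real i * th \<le> 2*x0" using ph th_x0 by auto
    note gb = gg_bound[OF br]
    have "gg x0 (ph - real i * th) / DD m \<le> (cos (2*x0) + sin x0) / DD m"
      using gb(1) D_pos by (simp add: divide_right_mono)
    hence u: "Phi m x t \<le> (cos (2*x0) + sin x0) / DD m * dist x t"
      unfolding P using mult_left_mono[OF _ zero_le_dist] by (metis mult.commute)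
    have "1 \<le> AA m * cos (2*x0)" using AC B_nonneg S_pos by simp
    also have "AA m * cos (2*x0) = (1 - sin x0) * cos (2*x0) / DD m" by (simp add: AA_def)
    also have "\<dots> \<le> gg x0 (ph - real i * th) / DD m" using gb(2) D_pos by (simp add: divide_right_mono)
    finally have "1 \<le> gg x0 (ph - real i * th) / DD m" .
    hence "dist x t * 1 \<le> Phi m x t" unfolding P by (intro mult_left_mono) auto
    thus ?thesis using u by simp
  qed
  thus "dist x t \<le> Phi m x t" "Phi m x t \<le> (cos (2*x0) + sin x0) / DD m * dist x t" by auto
qed

lemma nbr_props:
  assumes P: "finite P" "general_position m P" and i: "i < m" and t: "t \<in> P" "in_cone m x i t"
  shows "nbr P m x i \<in> P" "in_cone m x i (nbr P m x i)" "proj_len m x i (nbr P m x i) \<le> proj_len m x i t"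
proof -
  define S where "S = {v \<in> P. in_cone m x i v}"
  have fS: "finite S" using P by (simp add: S_def)
  have tS: "t \<in> S" using t by (simp add: S_def)
  define M where "M = Min (proj_len m x i ` S)"
  have "M \<in> proj_len m x i ` S" unfolding M_def using fS tS by (intro Min_in) auto
  then obtain v0 where v0: "v0 \<in> S" "proj_len m x i v0 = M" by auto
  have vmin: "\<forall>w\<in>S. proj_len m x i v0 \<le> proj_len m x i w" using v0 fS unfolding M_def by auto
  let ?Q = "\<lambda>v. v \<in> P \<and> in_cone m x i v \<and> (\<forall>w\<in>P. in_cone m x i w \<longrightarrow> proj_len m x i v \<le> proj_len m x i w)"
  have Q0: "?Q v0" using v0 vmin by (auto simp: S_def)
  have uniq: "v = v0" if "?Q v" for v
  proof (rule ccontr)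
    assume ne: "v \<noteq> v0"
    have "proj_len m x i v = proj_len m x i v0" using that Q0 by (meson order_antisym)
    hence "(v - v0) \<bullet> dir (real i * cone_angle m) = 0"
      by (simp add: proj_len_def inner_diff_left)
    moreover have "v \<in> P" "v0 \<in> P" using that Q0 by auto
    ultimately show False using P(2) ne i unfolding general_position_def by blast
  qed
  have "?Q (nbr P m x i)" unfolding nbr_def using Q0 uniq by (rule theI)
  thus "nbr P m x i \<in> P" "in_cone m x i (nbr P m x i)" "proj_len m x i (nbr P m x i) \<le> proj_len m x i t"
    using t by auto
qed

lemma route_step_ok:
  assumes P: "finite P" "general_position m P" and x: "x \<in> P" and t: "t \<in> P" and ne: "x \<noteq> t"
  shows "route_step P m t x \<in> P" "route_step P m t x \<noteq> x"
    "dist x (route_step P m t x) + Phi m (route_step P m t x) t \<le> Phi m x t"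
proof -
  have "route_step P m t x \<in> P \<and> route_step P m t x \<noteq> x \<and>
    dist x (route_step P m t x) + Phi m (route_step P m t x) t \<le> Phi m x t"
  proof (cases "theta_edge P m x t")
    case True
    thus ?thesis using ne t Phi_bounds(1)[of x t] by (simp add: route_step_def)
  next
    case False
    define i where "i = cone_idx m x t"
    have i: "i < m" "in_cone m x i t" using cone_idx[OF m_pos, of t x] ne unfolding i_def by auto
    note nb = nbr_props[OF P i(1) t i(2)]
    have rs: "route_step P m t x = nbr P m x i" using False ne by (simp add: route_step_def i_def)
    have "nbr P m x i \<noteq> x" using in_cone_polar[OF nb(2)] by metis
    thus ?thesis unfolding rs using nb geo_step[OF i(2,1) nb(2) nb(3)] by simp
  qed
  thus "route_step P m t x \<in> P" "route_step P m t x \<noteq> x"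
    "dist x (route_step P m t x) + Phi m (route_step P m t x) t \<le> Phi m x t" by auto
qed

end


theorem mainTheorem14:
  fixes k m :: nat and P :: "point set" and u w :: point
  assumes "k \<ge> 1" and "m = 4 * k + 3 \<or> m = 4 * k + 5"
    and "finite P" and "general_position m P" and "u \<in> P" and "w \<in> P"
  shows "\<exists>n. route_seq P m u w n = w \<and>
           route_len P m u w n \<le>
             (1 + 2 * sin (cone_angle m / 2) * cos (cone_angle m / 4)
                  / (cos (cone_angle m / 2) - sin (3 * cone_angle m / 4))) * dist u w"
proof -
  interpret rsetup k m using assms(1,2) by unfold_locales
  define f where "f = route_seq P m u w"
  have fS: "f (Suc n) = route_step P m w (f n)" for n by (simp add: f_def route_seq_def)
  have f0: "f 0 = u" by (simp add: f_def route_seq_def)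
  have lS: "route_len P m u w (Suc n) = route_len P m u w n + dist (f n) (f (Suc n))" for n
    by (simp add: route_len_def f_def)
  have inv: "f n \<in> P \<and> route_len P m u w n + Phi m (f n) w \<le> Phi m u w" for n
  proof (induction n)
    case 0 thus ?case using assms(5) f0 by (simp add: route_len_def)
  next
    case (Suc n)
    show ?case
    proof (cases "f n = w")
      case True
      hence "f (Suc n) = w" using fS by (simp add: route_step_def)
      thus ?thesis using Suc True lS[of n] by simp
    next
      case False
      note st = route_step_ok[OF assms(3,4) _ assms(6) False]
      show ?thesis using Suc st lS[of n] fS[of n] by auto
    qed
  qed
  have "\<exists>n. f n = w"
  proof (rule ccontr)
    assume nw: "\<not> (\<exists>n. f n = w)"
    have dec: "- Phi m (f n) w < - Phi m (f (Suc n)) w" for n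
    proof -
      note st = route_step_ok[OF assms(3,4) _ assms(6), of "f n"]
      have "f (Suc n) \<noteq> f n" "dist (f n) (f (Suc n)) + Phi m (f (Suc n)) w \<le> Phi m (f n) w"
        using st inv[of n] nw fS[of n] by auto
      moreover have "dist (f n) (f (Suc n)) > 0" using calculation(1) by simp
      ultimately show ?thesis by linarith
    qed
    have "strict_mono (\<lambda>n. - Phi m (f n) w)" using dec by (simp add: strict_mono_Suc_iff)
    hence "inj (\<lambda>n. - Phi m (f n) w)" by (rule strict_mono_imp_inj_on)
    hence injf: "inj f" by (simp add: inj_on_def)
    have "range f \<subseteq> P" using inv by auto
    hence "finite (range f)" using assms(3) finite_subset by blast
    hence "finite (UNIV :: nat set)" using injf finite_imageD by blast
    thus False by simp
  qed
  then obtain n where n: "f n = w" by blast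
  have "route_len P m u w n \<le> Phi m u w" using inv[of n] n by simp
  also have "\<dots> \<le> (cos (2*x0) + sin x0) / DD m * dist u w" by (rule Phi_bounds(2))
  finally show ?thesis using n cst_eq unfolding f_def by auto
qed


end
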